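(* Let $m\ge 1$ be an integer and let $G^m$ be the graph obtained as follows: take $m$ disjoint copies $F_1,\dots,F_m$ of the graph $F$, denoting by $x_s,x'_s$ the copies of $x,x'$ in $F_s$; for $s=1,\dots,m-1$ identify $x'_s$ with $x_{s+1}$ and call the resulting vertex $w_{s+1}$; finally identify $x_1$ with $x'_m$ and call the resulting vertex $w_1$. Then $G^m$ has an acyclic $(\mathcal{S}_3,\mathcal{S}_3)$-colouring, and in every acyclic $(\mathcal{S}_3,\mathcal{S}_3)$-colouring of $G^m$ the vertices $w_1,\dots,w_m$ all have the same colour and each $w_s$ is $3$-saturated.
   Context: $F$ is the graph with vertex set $\{a,b,c,d,e,g,h,i,x,x'\}$ and edge set $\{de,\ da,\ ae,\ dc,\ ec,\ ac,\ eg,\ cg,\ db,\ ab,\ cb,\ gb,\ ex',\ bx',\ di,\ ix,\ ah,\ hx\}$. An acyclic $(\mathcal{S}_3,\mathcal{S}_3)$-colouring of a graph $G$ is a map $c:V(G)\to\{1,2\}$ (not necessarily proper) such that each of the two colour classes induces a subgraph of maximum degree at most $3$, and there is no cycle in $G$ every edge of which joins a vertex of colour $1$ to a vertex of colour $2$. A vertex $v$ is $3$-saturated if exactly $3$ of its neighbours have colour $c(v)$. *)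

theory Defs
  imports Main
begin

definition adj :: "'a set set \<Rightarrow> 'a \<Rightarrow> 'a \<Rightarrow> bool" where
  "adj E u v \<longleftrightarrow> {u, v} \<in> E \<and> u \<noteq> v"

definition is_cycle :: "'a set \<Rightarrow> 'a set set \<Rightarrow> 'a list \<Rightarrow> bool" where
  "is_cycle V E cs \<longleftrightarrow> length cs \<ge> 3 \<and> distinct cs \<and> set cs \<subseteq> V \<and>
     (\<forall>i < length cs. adj E (cs ! i) (cs ! ((i + 1) mod length cs)))"

definition same_deg :: "'a set \<Rightarrow> 'a set set \<Rightarrow> ('a \<Rightarrow> nat) \<Rightarrow> 'a \<Rightarrow> nat" where
  "same_deg V E c v = card {u \<in> V. adj E v u \<and> c u = c v}"

definition acyclic_S3S3_colouring :: "'a set \<Rightarrow> 'a set set \<Rightarrow> ('a \<Rightarrow> nat) \<Rightarrow> bool" where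
  "acyclic_S3S3_colouring V E c \<longleftrightarrow>
     (\<forall>v \<in> V. c v \<in> {1, 2}) \<and>
     (\<forall>v \<in> V. same_deg V E c v \<le> 3) \<and>
     \<not> (\<exists>cs. is_cycle V E cs \<and>
            (\<forall>i < length cs. c (cs ! i) \<noteq> c (cs ! ((i + 1) mod length cs))))"

definition saturated3 :: "'a set \<Rightarrow> 'a set set \<Rightarrow> ('a \<Rightarrow> nat) \<Rightarrow> 'a \<Rightarrow> bool" where
  "saturated3 V E c v \<longleftrightarrow> same_deg V E c v = 3"

datatype fv = Fa | Fb | Fc | Fd | Fe | Fg | Fh | Fi | Fx | Fx'

definition F_edges :: "(fv \<times> fv) list" where
  "F_edges = [(Fd,Fe),(Fd,Fa),(Fa,Fe),(Fd,Fc),(Fe,Fc),(Fa,Fc),(Fe,Fg),(Fc,Fg),(Fd,Fb),(Fa,Fb),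
              (Fc,Fb),(Fg,Fb),(Fe,Fx'),(Fb,Fx'),(Fd,Fi),(Fi,Fx),(Fa,Fh),(Fh,Fx)]"

(* G^m: copies indexed s = 0..m-1 (copy F_{s+1} in the paper).  Vertex (s,v) is the copy of v in
   F_{s+1}; the copy of x' in F_{s+1} is identified with the copy of x in F_{s+2} (indices mod m),
   so canonical representatives never use Fx'.  w_{s+1} is the vertex (s, Fx). *)
definition canon :: "nat \<Rightarrow> nat \<Rightarrow> fv \<Rightarrow> nat \<times> fv" where
  "canon m s v = (if v = Fx' then ((s + 1) mod m, Fx) else (s, v))"

definition Gm_V :: "nat \<Rightarrow> (nat \<times> fv) set" where
  "Gm_V m = {(s, v). s < m \<and> v \<noteq> Fx'}"

definition Gm_E :: "nat \<Rightarrow> (nat \<times> fv) set set" where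
  "Gm_E m = {{canon m s u, canon m s v} | s u v. s < m \<and> (u, v) \<in> set F_edges}"

definition w :: "nat \<Rightarrow> nat \<times> fv" where
  "w s = (s - 1, Fx)"

end

theory Submission
  imports Defs
begin


lemma adj_sym: "adj E u v \<Longrightarrow> adj E v u" by (auto simp: adj_def insert_commute)

lemma adjF: "s < m \<Longrightarrow> (u,v) \<in> set F_edges \<or> (v,u) \<in> set F_edges \<Longrightarrow> canon m s u \<noteq> canon m s v
   \<Longrightarrow> adj (Gm_E m) (canon m s u) (canon m s v)"
  unfolding adj_def Gm_E_def by (auto simp: insert_commute)

lemma fv_UNIV: "(UNIV::fv set) = {Fa,Fb,Fc,Fd,Fe,Fg,Fh,Fi,Fx,Fx'}"
  apply (rule UNIV_eq_I) subgoal for x by (cases x) auto done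

lemma fin: "finite (Gm_V m)"
proof -
  have "Gm_V m \<subseteq> {..<m} \<times> UNIV" by (auto simp: Gm_V_def)
  moreover have "finite ({..<m} \<times> (UNIV::fv set))" by (simp add: fv_UNIV)
  ultimately show ?thesis by (rule finite_subset)
qed

lemma all4: "(\<forall>i<4. P (i::nat)) \<longleftrightarrow> P 0 \<and> P 1 \<and> P 2 \<and> P 3"
  by (simp add: numeral_eq_Suc All_less_Suc2 del: All_less_Suc)
lemma cyc4:
  assumes A: "acyclic_S3S3_colouring V E c"
  and h: "distinct [p1,p2,p3,p4]" "p1 \<in> V" "p2 \<in> V" "p3 \<in> V" "p4 \<in> V"
    "adj E p1 p2" "adj E p2 p3" "adj E p3 p4" "adj E p4 p1"
  shows "\<not> (c p1 \<noteq> c p2 \<and> c p2 \<noteq> c p3 \<and> c p3 \<noteq> c p4 \<and> c p4 \<noteq> c p1)"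
proof
  assume b: "c p1 \<noteq> c p2 \<and> c p2 \<noteq> c p3 \<and> c p3 \<noteq> c p4 \<and> c p4 \<noteq> c p1"
  let ?cs = "[p1,p2,p3,p4]"
  have l: "length ?cs = 4" by simp
  have c1: "is_cycle V E ?cs" unfolding is_cycle_def l
  proof (intro conjI)
    show "3 \<le> (4::nat)" by simp
    show "distinct ?cs" by (rule h(1))
    show "set ?cs \<subseteq> V" using h(2-5) by simp
    show "\<forall>i<4. adj E (?cs ! i) (?cs ! ((i + 1) mod 4))" unfolding all4 using h(6-9) by simp
  qed
  have c2: "\<forall>i<length ?cs. c (?cs ! i) \<noteq> c (?cs ! ((i + 1) mod length ?cs))"
    unfolding l all4 using b by simp
  have nc: "\<not> (\<exists>cs. is_cycle V E cs \<and> (\<forall>i<length cs. c (cs ! i) \<noteq> c (cs ! ((i + 1) mod length cs))))"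
    using A unfolding acyclic_S3S3_colouring_def by (rule conjunct2[OF conjunct2])
  have "\<exists>cs. is_cycle V E cs \<and> (\<forall>i<length cs. c (cs ! i) \<noteq> c (cs ! ((i + 1) mod length cs)))"
    using conjI[OF c1 c2] by (rule exI)
  with nc show False by (rule notE)
qed

lemma all6: "(\<forall>i<6. P (i::nat)) \<longleftrightarrow> P 0 \<and> P 1 \<and> P 2 \<and> P 3 \<and> P 4 \<and> P 5"
  by (simp add: numeral_eq_Suc All_less_Suc2 del: All_less_Suc)
lemma cyc6:
  assumes A: "acyclic_S3S3_colouring V E c"
  and h: "distinct [p1,p2,p3,p4,p5,p6]" "p1 \<in> V" "p2 \<in> V" "p3 \<in> V" "p4 \<in> V" "p5 \<in> V" "p6 \<in> V"
    "adj E p1 p2" "adj E p2 p3" "adj E p3 p4" "adj E p4 p5" "adj E p5 p6" "adj E p6 p1"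
  shows "\<not> (c p1 \<noteq> c p2 \<and> c p2 \<noteq> c p3 \<and> c p3 \<noteq> c p4 \<and> c p4 \<noteq> c p5 \<and> c p5 \<noteq> c p6 \<and> c p6 \<noteq> c p1)"
proof
  assume b: "c p1 \<noteq> c p2 \<and> c p2 \<noteq> c p3 \<and> c p3 \<noteq> c p4 \<and> c p4 \<noteq> c p5 \<and> c p5 \<noteq> c p6 \<and> c p6 \<noteq> c p1"
  let ?cs = "[p1,p2,p3,p4,p5,p6]"
  have l: "length ?cs = 6" by simp
  have c1: "is_cycle V E ?cs" unfolding is_cycle_def l
  proof (intro conjI)
    show "3 \<le> (6::nat)" by simp
    show "distinct ?cs" by (rule h(1))
    show "set ?cs \<subseteq> V" using h(2-7) by simp
    show "\<forall>i<6. adj E (?cs ! i) (?cs ! ((i + 1) mod 6))" unfolding all6 using h(8-13) by simp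
  qed
  have c2: "\<forall>i<length ?cs. c (?cs ! i) \<noteq> c (?cs ! ((i + 1) mod length ?cs))"
    unfolding l all6 using b by simp
  have nc: "\<not> (\<exists>cs. is_cycle V E cs \<and> (\<forall>i<length cs. c (cs ! i) \<noteq> c (cs ! ((i + 1) mod length cs))))"
    using A unfolding acyclic_S3S3_colouring_def by (rule conjunct2[OF conjunct2])
  have "\<exists>cs. is_cycle V E cs \<and> (\<forall>i<length cs. c (cs ! i) \<noteq> c (cs ! ((i + 1) mod length cs)))"
    using conjI[OF c1 c2] by (rule exI)
  with nc show False by (rule notE)
qed

lemma deg4:
  assumes A: "acyclic_S3S3_colouring V E c" and fV: "finite V"
  and h: "v \<in> V" "distinct [u1,u2,u3,u4]" "u1 \<in> V" "u2 \<in> V" "u3 \<in> V" "u4 \<in> V"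
    "adj E v u1" "adj E v u2" "adj E v u3" "adj E v u4"
  shows "\<not> (c u1 = c v \<and> c u2 = c v \<and> c u3 = c v \<and> c u4 = c v)"
proof
  assume b: "c u1 = c v \<and> c u2 = c v \<and> c u3 = c v \<and> c u4 = c v"
  have "{u1,u2,u3,u4} \<subseteq> {u \<in> V. adj E v u \<and> c u = c v}" using h b by blast
  then have "card {u1,u2,u3,u4} \<le> same_deg V E c v"
    unfolding same_deg_def by (rule card_mono[rotated]) (use fV in simp)
  moreover have "card {u1,u2,u3,u4} = 4" using h(2) by simp
  moreover have "same_deg V E c v \<le> 3" using A h(1) unfolding acyclic_S3S3_colouring_def by blast
  ultimately show False by linarith
qed

lemma adj_0: "s < m \<Longrightarrow> adj (Gm_E m) (s, Fd) (s, Fe)"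
  using adjF[of s m Fd Fe] by (simp add: canon_def F_edges_def)
lemma adj_1: "s < m \<Longrightarrow> adj (Gm_E m) (s, Fe) (s, Fd)"
  using adjF[of s m Fe Fd] by (simp add: canon_def F_edges_def)
lemma adj_2: "s < m \<Longrightarrow> adj (Gm_E m) (s, Fd) (s, Fa)"
  using adjF[of s m Fd Fa] by (simp add: canon_def F_edges_def)
lemma adj_3: "s < m \<Longrightarrow> adj (Gm_E m) (s, Fa) (s, Fd)"
  using adjF[of s m Fa Fd] by (simp add: canon_def F_edges_def)
lemma adj_4: "s < m \<Longrightarrow> adj (Gm_E m) (s, Fa) (s, Fe)"
  using adjF[of s m Fa Fe] by (simp add: canon_def F_edges_def)
lemma adj_5: "s < m \<Longrightarrow> adj (Gm_E m) (s, Fe) (s, Fa)"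
  using adjF[of s m Fe Fa] by (simp add: canon_def F_edges_def)
lemma adj_6: "s < m \<Longrightarrow> adj (Gm_E m) (s, Fd) (s, Fc)"
  using adjF[of s m Fd Fc] by (simp add: canon_def F_edges_def)
lemma adj_7: "s < m \<Longrightarrow> adj (Gm_E m) (s, Fc) (s, Fd)"
  using adjF[of s m Fc Fd] by (simp add: canon_def F_edges_def)
lemma adj_8: "s < m \<Longrightarrow> adj (Gm_E m) (s, Fe) (s, Fc)"
  using adjF[of s m Fe Fc] by (simp add: canon_def F_edges_def)
lemma adj_9: "s < m \<Longrightarrow> adj (Gm_E m) (s, Fc) (s, Fe)"
  using adjF[of s m Fc Fe] by (simp add: canon_def F_edges_def)
lemma adj_10: "s < m \<Longrightarrow> adj (Gm_E m) (s, Fa) (s, Fc)"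
  using adjF[of s m Fa Fc] by (simp add: canon_def F_edges_def)
lemma adj_11: "s < m \<Longrightarrow> adj (Gm_E m) (s, Fc) (s, Fa)"
  using adjF[of s m Fc Fa] by (simp add: canon_def F_edges_def)
lemma adj_12: "s < m \<Longrightarrow> adj (Gm_E m) (s, Fe) (s, Fg)"
  using adjF[of s m Fe Fg] by (simp add: canon_def F_edges_def)
lemma adj_13: "s < m \<Longrightarrow> adj (Gm_E m) (s, Fg) (s, Fe)"
  using adjF[of s m Fg Fe] by (simp add: canon_def F_edges_def)
lemma adj_14: "s < m \<Longrightarrow> adj (Gm_E m) (s, Fc) (s, Fg)"
  using adjF[of s m Fc Fg] by (simp add: canon_def F_edges_def)
lemma adj_15: "s < m \<Longrightarrow> adj (Gm_E m) (s, Fg) (s, Fc)"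
  using adjF[of s m Fg Fc] by (simp add: canon_def F_edges_def)
lemma adj_16: "s < m \<Longrightarrow> adj (Gm_E m) (s, Fd) (s, Fb)"
  using adjF[of s m Fd Fb] by (simp add: canon_def F_edges_def)
lemma adj_17: "s < m \<Longrightarrow> adj (Gm_E m) (s, Fb) (s, Fd)"
  using adjF[of s m Fb Fd] by (simp add: canon_def F_edges_def)
lemma adj_18: "s < m \<Longrightarrow> adj (Gm_E m) (s, Fa) (s, Fb)"
  using adjF[of s m Fa Fb] by (simp add: canon_def F_edges_def)
lemma adj_19: "s < m \<Longrightarrow> adj (Gm_E m) (s, Fb) (s, Fa)"
  using adjF[of s m Fb Fa] by (simp add: canon_def F_edges_def)
lemma adj_20: "s < m \<Longrightarrow> adj (Gm_E m) (s, Fc) (s, Fb)"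
  using adjF[of s m Fc Fb] by (simp add: canon_def F_edges_def)
lemma adj_21: "s < m \<Longrightarrow> adj (Gm_E m) (s, Fb) (s, Fc)"
  using adjF[of s m Fb Fc] by (simp add: canon_def F_edges_def)
lemma adj_22: "s < m \<Longrightarrow> adj (Gm_E m) (s, Fg) (s, Fb)"
  using adjF[of s m Fg Fb] by (simp add: canon_def F_edges_def)
lemma adj_23: "s < m \<Longrightarrow> adj (Gm_E m) (s, Fb) (s, Fg)"
  using adjF[of s m Fb Fg] by (simp add: canon_def F_edges_def)
lemma adj_24: "s < m \<Longrightarrow> adj (Gm_E m) (s, Fe) (Suc s mod m, Fx)"
  using adjF[of s m Fe Fx'] by (simp add: canon_def F_edges_def)
lemma adj_25: "s < m \<Longrightarrow> adj (Gm_E m) (Suc s mod m, Fx) (s, Fe)"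
  using adjF[of s m Fx' Fe] by (simp add: canon_def F_edges_def)
lemma adj_26: "s < m \<Longrightarrow> adj (Gm_E m) (s, Fb) (Suc s mod m, Fx)"
  using adjF[of s m Fb Fx'] by (simp add: canon_def F_edges_def)
lemma adj_27: "s < m \<Longrightarrow> adj (Gm_E m) (Suc s mod m, Fx) (s, Fb)"
  using adjF[of s m Fx' Fb] by (simp add: canon_def F_edges_def)
lemma adj_28: "s < m \<Longrightarrow> adj (Gm_E m) (s, Fd) (s, Fi)"
  using adjF[of s m Fd Fi] by (simp add: canon_def F_edges_def)
lemma adj_29: "s < m \<Longrightarrow> adj (Gm_E m) (s, Fi) (s, Fd)"
  using adjF[of s m Fi Fd] by (simp add: canon_def F_edges_def)
lemma adj_30: "s < m \<Longrightarrow> adj (Gm_E m) (s, Fi) (s, Fx)"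
  using adjF[of s m Fi Fx] by (simp add: canon_def F_edges_def)
lemma adj_31: "s < m \<Longrightarrow> adj (Gm_E m) (s, Fx) (s, Fi)"
  using adjF[of s m Fx Fi] by (simp add: canon_def F_edges_def)
lemma adj_32: "s < m \<Longrightarrow> adj (Gm_E m) (s, Fa) (s, Fh)"
  using adjF[of s m Fa Fh] by (simp add: canon_def F_edges_def)
lemma adj_33: "s < m \<Longrightarrow> adj (Gm_E m) (s, Fh) (s, Fa)"
  using adjF[of s m Fh Fa] by (simp add: canon_def F_edges_def)
lemma adj_34: "s < m \<Longrightarrow> adj (Gm_E m) (s, Fh) (s, Fx)"
  using adjF[of s m Fh Fx] by (simp add: canon_def F_edges_def)
lemma adj_35: "s < m \<Longrightarrow> adj (Gm_E m) (s, Fx) (s, Fh)"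
  using adjF[of s m Fx Fh] by (simp add: canon_def F_edges_def)
lemmas adjs = adj_0 adj_1 adj_2 adj_3 adj_4 adj_5 adj_6 adj_7 adj_8 adj_9 adj_10 adj_11 adj_12 adj_13 adj_14 adj_15 adj_16 adj_17 adj_18 adj_19 adj_20 adj_21 adj_22 adj_23 adj_24 adj_25 adj_26 adj_27 adj_28 adj_29 adj_30 adj_31 adj_32 adj_33 adj_34 adj_35



lemma local_F:
  assumes A: "acyclic_S3S3_colouring (Gm_V m) (Gm_E m) col" and s: "s < m"
  shows "col (s, Fx) = col ((s + 1) mod m, Fx) \<and> col (s, Fh) = col (s, Fx) \<and> col (s, Fi) = col (s, Fx)
     \<and> ((col (s, Fe) = col (s, Fx)) \<noteq> (col (s, Fb) = col (s, Fx)))"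
proof -
  have m: "(s + 1) mod m < m" using s by simp
  have cv: "\<And>v. v \<in> Gm_V m \<Longrightarrow> col v = 1 \<or> col v = 2" using A unfolding acyclic_S3S3_colouring_def by auto
  have ca: "col (s, Fa) = 1 \<or> col (s, Fa) = 2" by (rule cv) (use s in \<open>simp add: Gm_V_def\<close>)
  have cb: "col (s, Fb) = 1 \<or> col (s, Fb) = 2" by (rule cv) (use s in \<open>simp add: Gm_V_def\<close>)
  have cc: "col (s, Fc) = 1 \<or> col (s, Fc) = 2" by (rule cv) (use s in \<open>simp add: Gm_V_def\<close>)
  have cd: "col (s, Fd) = 1 \<or> col (s, Fd) = 2" by (rule cv) (use s in \<open>simp add: Gm_V_def\<close>)
  have ce: "col (s, Fe) = 1 \<or> col (s, Fe) = 2" by (rule cv) (use s in \<open>simp add: Gm_V_def\<close>)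
  have cg: "col (s, Fg) = 1 \<or> col (s, Fg) = 2" by (rule cv) (use s in \<open>simp add: Gm_V_def\<close>)
  have ch: "col (s, Fh) = 1 \<or> col (s, Fh) = 2" by (rule cv) (use s in \<open>simp add: Gm_V_def\<close>)
  have ci: "col (s, Fi) = 1 \<or> col (s, Fi) = 2" by (rule cv) (use s in \<open>simp add: Gm_V_def\<close>)
  have cx: "col (s, Fx) = 1 \<or> col (s, Fx) = 2" by (rule cv) (use s in \<open>simp add: Gm_V_def\<close>)
  have cX: "col ((s + 1) mod m, Fx) = 1 \<or> col ((s + 1) mod m, Fx) = 2" by (rule cv) (use m in \<open>simp add: Gm_V_def\<close>)
  have k0: "\<not> (col (s, Fa) \<noteq> col (s, Fe) \<and> col (s, Fe) \<noteq> col (s, Fc) \<and> col (s, Fc) \<noteq> col (s, Fb) \<and> col (s, Fb) \<noteq> col (s, Fa))"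
    by (rule cyc4[OF A]) (use s m in \<open>simp_all add: adjs Gm_V_def\<close>)
  have k1: "\<not> (col (s, Fa) \<noteq> col (s, Fb) \<and> col (s, Fb) \<noteq> col (s, Fd) \<and> col (s, Fd) \<noteq> col (s, Fc) \<and> col (s, Fc) \<noteq> col (s, Fa))"
    by (rule cyc4[OF A]) (use s m in \<open>simp_all add: adjs Gm_V_def\<close>)
  have k2: "\<not> (col (s, Fa) \<noteq> col (s, Fd) \<and> col (s, Fd) \<noteq> col (s, Fe) \<and> col (s, Fe) \<noteq> col (s, Fc) \<and> col (s, Fc) \<noteq> col (s, Fa))"
    by (rule cyc4[OF A]) (use s m in \<open>simp_all add: adjs Gm_V_def\<close>)
  have k3: "\<not> (col (s, Fc) \<noteq> col (s, Fg) \<and> col (s, Fg) \<noteq> col (s, Fe) \<and> col (s, Fe) \<noteq> col (s, Fd) \<and> col (s, Fd) \<noteq> col (s, Fc))"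
    by (rule cyc4[OF A]) (use s m in \<open>simp_all add: adjs Gm_V_def\<close>)
  have k4: "\<not> (col (s, Fb) = col (s, Fa) \<and> col (s, Fc) = col (s, Fa) \<and> col (s, Fd) = col (s, Fa) \<and> col (s, Fe) = col (s, Fa))"
    by (rule deg4[OF A fin]) (use s m in \<open>simp_all add: adjs Gm_V_def\<close>)
  have k5: "\<not> (col (s, Fa) \<noteq> col (s, Fc) \<and> col (s, Fc) \<noteq> col (s, Fg) \<and> col (s, Fg) \<noteq> col (s, Fe) \<and> col (s, Fe) \<noteq> col (s, Fa))"
    by (rule cyc4[OF A]) (use s m in \<open>simp_all add: adjs Gm_V_def\<close>)
  have k6: "\<not> (col (s, Fa) \<noteq> col (s, Fd) \<and> col (s, Fd) \<noteq> col (s, Fc) \<and> col (s, Fc) \<noteq> col (s, Fe) \<and> col (s, Fe) \<noteq> col (s, Fa))"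
    by (rule cyc4[OF A]) (use s m in \<open>simp_all add: adjs Gm_V_def\<close>)
  have k7: "\<not> (col ((s + 1) mod m, Fx) = col (s, Fe) \<and> col (s, Fa) = col (s, Fe) \<and> col (s, Fc) = col (s, Fe) \<and> col (s, Fg) = col (s, Fe))"
    by (rule deg4[OF A fin]) (use s m in \<open>simp_all add: adjs Gm_V_def\<close>)
  have k8: "\<not> (col ((s + 1) mod m, Fx) \<noteq> col (s, Fe) \<and> col (s, Fe) \<noteq> col (s, Fc) \<and> col (s, Fc) \<noteq> col (s, Fb) \<and> col (s, Fb) \<noteq> col ((s + 1) mod m, Fx))"
    by (rule cyc4[OF A]) (use s m in \<open>simp_all add: adjs Gm_V_def\<close>)
  have k9: "\<not> (col (s, Fb) = col (s, Fc) \<and> col (s, Fd) = col (s, Fc) \<and> col (s, Fe) = col (s, Fc) \<and> col (s, Fg) = col (s, Fc))"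
    by (rule deg4[OF A fin]) (use s m in \<open>simp_all add: adjs Gm_V_def\<close>)
  have k10: "\<not> (col ((s + 1) mod m, Fx) = col (s, Fb) \<and> col (s, Fa) = col (s, Fb) \<and> col (s, Fd) = col (s, Fb) \<and> col (s, Fg) = col (s, Fb))"
    by (rule deg4[OF A fin]) (use s m in \<open>simp_all add: adjs Gm_V_def\<close>)
  have k11: "\<not> (col (s, Fa) \<noteq> col (s, Fc) \<and> col (s, Fc) \<noteq> col (s, Fd) \<and> col (s, Fd) \<noteq> col (s, Fe) \<and> col (s, Fe) \<noteq> col (s, Fa))"
    by (rule cyc4[OF A]) (use s m in \<open>simp_all add: adjs Gm_V_def\<close>)
  have k12: "\<not> (col (s, Fa) \<noteq> col (s, Fd) \<and> col (s, Fd) \<noteq> col (s, Fb) \<and> col (s, Fb) \<noteq> col (s, Fc) \<and> col (s, Fc) \<noteq> col (s, Fa))"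
    by (rule cyc4[OF A]) (use s m in \<open>simp_all add: adjs Gm_V_def\<close>)
  have k13: "\<not> (col (s, Fb) = col (s, Fa) \<and> col (s, Fc) = col (s, Fa) \<and> col (s, Fd) = col (s, Fa) \<and> col (s, Fh) = col (s, Fa))"
    by (rule deg4[OF A fin]) (use s m in \<open>simp_all add: adjs Gm_V_def\<close>)
  have k14: "\<not> (col (s, Fc) = col (s, Fa) \<and> col (s, Fd) = col (s, Fa) \<and> col (s, Fe) = col (s, Fa) \<and> col (s, Fh) = col (s, Fa))"
    by (rule deg4[OF A fin]) (use s m in \<open>simp_all add: adjs Gm_V_def\<close>)
  have k15: "\<not> (col ((s + 1) mod m, Fx) \<noteq> col (s, Fe) \<and> col (s, Fe) \<noteq> col (s, Fd) \<and> col (s, Fd) \<noteq> col (s, Fb) \<and> col (s, Fb) \<noteq> col ((s + 1) mod m, Fx))"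
    by (rule cyc4[OF A]) (use s m in \<open>simp_all add: adjs Gm_V_def\<close>)
  have k16: "\<not> (col (s, Fb) \<noteq> col (s, Fg) \<and> col (s, Fg) \<noteq> col (s, Fe) \<and> col (s, Fe) \<noteq> col (s, Fc) \<and> col (s, Fc) \<noteq> col (s, Fb))"
    by (rule cyc4[OF A]) (use s m in \<open>simp_all add: adjs Gm_V_def\<close>)
  have k17: "\<not> (col (s, Fa) \<noteq> col (s, Fb) \<and> col (s, Fb) \<noteq> col (s, Fc) \<and> col (s, Fc) \<noteq> col (s, Fd) \<and> col (s, Fd) \<noteq> col (s, Fa))"
    by (rule cyc4[OF A]) (use s m in \<open>simp_all add: adjs Gm_V_def\<close>)
  have k18: "\<not> (col (s, Fa) = col (s, Fd) \<and> col (s, Fb) = col (s, Fd) \<and> col (s, Fc) = col (s, Fd) \<and> col (s, Fi) = col (s, Fd))"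
    by (rule deg4[OF A fin]) (use s m in \<open>simp_all add: adjs Gm_V_def\<close>)
  have k19: "\<not> (col (s, Fa) = col (s, Fd) \<and> col (s, Fc) = col (s, Fd) \<and> col (s, Fe) = col (s, Fd) \<and> col (s, Fi) = col (s, Fd))"
    by (rule deg4[OF A fin]) (use s m in \<open>simp_all add: adjs Gm_V_def\<close>)
  have k20: "\<not> (col (s, Fa) \<noteq> col (s, Fe) \<and> col (s, Fe) \<noteq> col (s, Fd) \<and> col (s, Fd) \<noteq> col (s, Fi) \<and> col (s, Fi) \<noteq> col (s, Fx) \<and> col (s, Fx) \<noteq> col (s, Fh) \<and> col (s, Fh) \<noteq> col (s, Fa))"
    by (rule cyc6[OF A]) (use s m in \<open>simp_all add: adjs Gm_V_def\<close>)
  have k21: "\<not> (col (s, Fa) \<noteq> col (s, Fh) \<and> col (s, Fh) \<noteq> col (s, Fx) \<and> col (s, Fx) \<noteq> col (s, Fi) \<and> col (s, Fi) \<noteq> col (s, Fd) \<and> col (s, Fd) \<noteq> col (s, Fb) \<and> col (s, Fb) \<noteq> col (s, Fa))"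
    by (rule cyc6[OF A]) (use s m in \<open>simp_all add: adjs Gm_V_def\<close>)
  have k22: "\<not> (col ((s + 1) mod m, Fx) = col (s, Fb) \<and> col (s, Fa) = col (s, Fb) \<and> col (s, Fc) = col (s, Fb) \<and> col (s, Fd) = col (s, Fb))"
    by (rule deg4[OF A fin]) (use s m in \<open>simp_all add: adjs Gm_V_def\<close>)
  have k23: "\<not> (col ((s + 1) mod m, Fx) = col (s, Fe) \<and> col (s, Fa) = col (s, Fe) \<and> col (s, Fc) = col (s, Fe) \<and> col (s, Fd) = col (s, Fe))"
    by (rule deg4[OF A fin]) (use s m in \<open>simp_all add: adjs Gm_V_def\<close>)
  show ?thesis using ca cb cc cd ce cg ch ci cx cX k0 k1 k2 k3 k4 k5 k6 k7 k8 k9 k10 k11 k12 k13 k14 k15 k16 k17 k18 k19 k20 k21 k22 k23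
    by smt
qed



definition nbrs :: "nat \<Rightarrow> nat \<Rightarrow> fv \<Rightarrow> (nat \<times> fv) set" where
  "nbrs m s v = (case v of
     Fa \<Rightarrow> {(s,Fd),(s,Fe),(s,Fc),(s,Fb),(s,Fh)}
   | Fb \<Rightarrow> {(s,Fd),(s,Fa),(s,Fc),(s,Fg),(Suc s mod m,Fx)}
   | Fc \<Rightarrow> {(s,Fd),(s,Fe),(s,Fa),(s,Fg),(s,Fb)}
   | Fd \<Rightarrow> {(s,Fe),(s,Fa),(s,Fc),(s,Fb),(s,Fi)}
   | Fe \<Rightarrow> {(s,Fd),(s,Fa),(s,Fc),(s,Fg),(Suc s mod m,Fx)}
   | Fg \<Rightarrow> {(s,Fe),(s,Fc),(s,Fb)}
   | Fh \<Rightarrow> {(s,Fa),(s,Fx)}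
   | Fi \<Rightarrow> {(s,Fd),(s,Fx)}
   | Fx \<Rightarrow> {(s,Fh),(s,Fi),((s+m-1) mod m,Fe),((s+m-1) mod m,Fb)}
   | Fx' \<Rightarrow> {})"

lemma pred_eq: "t < m \<Longrightarrow> Suc t mod m = s \<Longrightarrow> t = (s + m - 1) mod m"
proof (cases "Suc t < m")
  case True
  assume "t < m" "Suc t mod m = s"
  then have "s = Suc t" using True by simp
  then show ?thesis using \<open>t < m\<close> by simp
next
  case False
  assume "t < m" "Suc t mod m = s"
  then have "Suc t = m" using False by simp
  then have "s = 0" using \<open>Suc t mod m = s\<close> by simp
  then show ?thesis using \<open>Suc t = m\<close> by simp
qed

lemma succ_pred: "s < m \<Longrightarrow> Suc ((s + m - 1) mod m) mod m = s"
proof -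
  assume s: "s < m"
  have "Suc ((s + m - 1) mod m) mod m = Suc (s + m - 1) mod m" by (simp add: mod_Suc_eq)
  also have "Suc (s + m - 1) = s + m" using s by simp
  finally show ?thesis using s by simp
qed

lemma nb:
  assumes "adj (Gm_E m) (s, v) q" "s < m"
  shows "q \<in> nbrs m s v"
proof -
  from assms(1) obtain t u u' where t: "t < m" and e: "(u, u') \<in> set F_edges"
    and eq: "{(s, v), q} = {canon m t u, canon m t u'}"
    unfolding adj_def Gm_E_def by blast
  have "((s, v) = canon m t u \<and> q = canon m t u') \<or> ((s, v) = canon m t u' \<and> q = canon m t u)"
    using eq by (auto simp: doubleton_eq_iff)
  then show ?thesis using e t
    by (auto simp: F_edges_def canon_def nbrs_def dest: pred_eq)
qed



lemma sat:
  assumes A: "acyclic_S3S3_colouring (Gm_V m) (Gm_E m) col" and s: "s < m"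
  shows "same_deg (Gm_V m) (Gm_E m) col (s, Fx) = 3"
proof -
  define p where "p = (s + m - 1) mod m"
  have p: "p < m" using s by (simp add: p_def)
  have sp: "Suc p mod m = s" using succ_pred[OF s] by (simp add: p_def)
  have L1: "col (s, Fh) = col (s, Fx)" "col (s, Fi) = col (s, Fx)" using local_F[OF A s] by auto
  have L2: "(col (p, Fe) = col (s, Fx)) \<noteq> (col (p, Fb) = col (s, Fx))"
    using local_F[OF A p] sp by auto
  have a1: "adj (Gm_E m) (s, Fx) (s, Fh)" using adj_35[OF s] .
  have a2: "adj (Gm_E m) (s, Fx) (s, Fi)" using adj_31[OF s] .
  have a3: "adj (Gm_E m) (s, Fx) (p, Fe)" using adj_25[OF p] sp by simp
  have a4: "adj (Gm_E m) (s, Fx) (p, Fb)" using adj_27[OF p] sp by simp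
  have N: "\<And>q. adj (Gm_E m) (s, Fx) q \<Longrightarrow> q \<in> {(s,Fh),(s,Fi),(p,Fe),(p,Fb)}"
    by (drule nb[OF _ s]) (simp add: nbrs_def p_def)
  show ?thesis
  proof (cases "col (p, Fe) = col (s, Fx)")
    case True
    have "{u \<in> Gm_V m. adj (Gm_E m) (s, Fx) u \<and> col u = col (s, Fx)} = {(s,Fh),(s,Fi),(p,Fe)}"
      using N a1 a2 a3 L1 L2 True s p by (auto simp: Gm_V_def)
    then show ?thesis unfolding same_deg_def by simp
  next
    case False
    have "{u \<in> Gm_V m. adj (Gm_E m) (s, Fx) u \<and> col u = col (s, Fx)} = {(s,Fh),(s,Fi),(p,Fb)}"
      using N a1 a2 a4 L1 L2 False s p by (auto simp: Gm_V_def)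
    then show ?thesis unfolding same_deg_def by simp
  qed
qed

lemma same_col:
  assumes A: "acyclic_S3S3_colouring (Gm_V m) (Gm_E m) col"
  shows "s < m \<Longrightarrow> col (s, Fx) = col (0, Fx)"
proof (induction s)
  case 0 then show ?case by simp
next
  case (Suc s)
  have "col (s, Fx) = col (Suc s mod m, Fx)" using local_F[OF A, of s] Suc.prems by simp
  then show ?case using Suc by simp
qed



definition f0 :: "nat \<times> fv \<Rightarrow> nat" where
  "f0 p = (if snd p \<in> {Fa,Fb,Fc,Fd} then 1 else 2)"

definition B :: "nat \<Rightarrow> nat \<Rightarrow> fv \<Rightarrow> (nat \<times> fv) set" where
  "B m s v = (case v of
     Fa \<Rightarrow> {(s,Fd),(s,Fc),(s,Fb)}
   | Fb \<Rightarrow> {(s,Fd),(s,Fa),(s,Fc)}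
   | Fc \<Rightarrow> {(s,Fd),(s,Fa),(s,Fb)}
   | Fd \<Rightarrow> {(s,Fa),(s,Fc),(s,Fb)}
   | Fe \<Rightarrow> {(s,Fg),(Suc s mod m,Fx)}
   | Fg \<Rightarrow> {(s,Fe)}
   | Fh \<Rightarrow> {(s,Fx)}
   | Fi \<Rightarrow> {(s,Fx)}
   | Fx \<Rightarrow> {(s,Fh),(s,Fi),((s+m-1) mod m,Fe)}
   | Fx' \<Rightarrow> {})"

lemma Bsub: "{u \<in> nbrs m s T. f0 u = f0 (s,T)} \<subseteq> B m s T"
  by (cases T) (auto simp: nbrs_def B_def f0_def)

lemma Bfin: "finite (B m s T)"
  by (cases T) (auto simp: B_def)

lemma Bcard: "card (B m s T) \<le> 3"
  by (cases T) (auto simp: B_def card_insert_if)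

lemma deg_f0:
  assumes v: "v \<in> Gm_V m"
  shows "same_deg (Gm_V m) (Gm_E m) f0 v \<le> 3"
proof -
  obtain s T where vs: "v = (s, T)" and s: "s < m" using v by (auto simp: Gm_V_def)
  have "{u \<in> Gm_V m. adj (Gm_E m) v u \<and> f0 u = f0 v} \<subseteq> B m s T"
  proof
    fix u assume "u \<in> {u \<in> Gm_V m. adj (Gm_E m) v u \<and> f0 u = f0 v}"
    then have "u \<in> nbrs m s T" "f0 u = f0 (s, T)" using nb[of m s T u] s vs by auto
    then show "u \<in> B m s T" using Bsub by blast
  qed
  then have "same_deg (Gm_V m) (Gm_E m) f0 v \<le> card (B m s T)"
    unfolding same_deg_def by (rule card_mono[OF Bfin])
  then show ?thesis using Bcard[of m s T] by linarith
qed

lemma modne: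
  assumes n: "3 \<le> n" and i: "i < n"
  shows "Suc i mod n \<noteq> (i + n - 1) mod n"
proof (cases "i = 0")
  case True
  then show ?thesis using n by simp
next
  case False
  have j: "(i + n - 1) mod n = i - 1"
  proof -
    have "i + n - 1 = (i - 1) + n" using False by simp
    then have "(i + n - 1) mod n = (i - 1) mod n" by simp
    then show ?thesis using i by simp
  qed
  show ?thesis
  proof (cases "Suc i < n")
    case True
    then show ?thesis using j False by simp
  next
    case False
    then have "Suc i = n" using i by simp
    then show ?thesis using j n by simp
  qed
qed

lemma cyc_nb:
  assumes cy: "is_cycle V E cs" and bi: "\<forall>i<length cs. c (cs ! i) \<noteq> c (cs ! ((i + 1) mod length cs))"
    and v: "v \<in> set cs"
  shows "\<exists>u1 u2. u1 \<in> set cs \<and> u2 \<in> set cs \<and> u1 \<noteq> u2 \<and> adj E v u1 \<and> adj E v u2 \<and> c v \<noteq> c u1 \<and> c v \<noteq> c u2"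
proof -
  let ?n = "length cs"
  have n: "3 \<le> ?n" and d: "distinct cs"
    and ad: "\<forall>i < ?n. adj E (cs ! i) (cs ! ((i + 1) mod ?n))"
    using cy unfolding is_cycle_def by auto
  obtain i where i: "i < ?n" and vi: "v = cs ! i" using v by (auto simp: in_set_conv_nth)
  define j where "j = (i + ?n - 1) mod ?n"
  have j: "j < ?n" unfolding j_def using n by (intro mod_less_divisor) linarith
  have ji: "(j + 1) mod ?n = i"
  proof -
    have "(j + 1) mod ?n = (i + ?n - 1 + 1) mod ?n" by (simp add: j_def mod_Suc_eq)
    also have "i + ?n - 1 + 1 = i + ?n" using n by simp
    finally show ?thesis using i by simp
  qed
  have i1: "(i + 1) mod ?n < ?n" using n by (intro mod_less_divisor) linarith
  have ne: "(i + 1) mod ?n \<noteq> j" using modne[OF n i] by (simp add: j_def)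
  have u1: "adj E v (cs ! ((i + 1) mod ?n))" "c v \<noteq> c (cs ! ((i + 1) mod ?n))" using ad bi i vi by auto
  have u2': "adj E (cs ! j) v" "c (cs ! j) \<noteq> c v" using ad[rule_format, OF j] bi[rule_format, OF j] ji vi by auto
  have u2: "adj E v (cs ! j)" "c v \<noteq> c (cs ! j)" using u2' adj_sym by metis+
  have dd: "cs ! ((i + 1) mod ?n) \<noteq> cs ! j" using nth_eq_iff_index_eq[OF d i1 j] ne by simp
  show ?thesis
    using u1 u2 dd nth_mem[OF i1] nth_mem[OF j] by blast
qed

lemma acyc_f0:
  "\<not> (\<exists>cs. is_cycle (Gm_V m) (Gm_E m) cs \<and>
            (\<forall>i<length cs. f0 (cs ! i) \<noteq> f0 (cs ! ((i + 1) mod length cs))))"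
proof
  assume "\<exists>cs. is_cycle (Gm_V m) (Gm_E m) cs \<and>
            (\<forall>i<length cs. f0 (cs ! i) \<noteq> f0 (cs ! ((i + 1) mod length cs)))"
  then obtain cs where cy: "is_cycle (Gm_V m) (Gm_E m) cs"
    and bi: "\<forall>i<length cs. f0 (cs ! i) \<noteq> f0 (cs ! ((i + 1) mod length cs))" by blast
  let ?S = "set cs"
  have SV: "?S \<subseteq> Gm_V m" using cy unfolding is_cycle_def by auto
  have ne: "?S \<noteq> {}" using cy unfolding is_cycle_def by auto
  have step: "\<And>t T. (t, T) \<in> ?S \<Longrightarrow> \<exists>u1 u2. u1 \<in> ?S \<and> u2 \<in> ?S \<and> u1 \<noteq> u2 \<and>
      u1 \<in> nbrs m t T \<and> u2 \<in> nbrs m t T \<and> f0 (t, T) \<noteq> f0 u1 \<and> f0 (t, T) \<noteq> f0 u2"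
  proof -
    fix t T assume tT: "(t, T) \<in> ?S"
    then have t: "t < m" using SV by (auto simp: Gm_V_def)
    from cyc_nb[OF cy bi tT] obtain u1 u2 where
      "u1 \<in> ?S" "u2 \<in> ?S" "u1 \<noteq> u2" "adj (Gm_E m) (t, T) u1" "adj (Gm_E m) (t, T) u2"
      "f0 (t, T) \<noteq> f0 u1" "f0 (t, T) \<noteq> f0 u2" by blast
    then show "\<exists>u1 u2. u1 \<in> ?S \<and> u2 \<in> ?S \<and> u1 \<noteq> u2 \<and>
      u1 \<in> nbrs m t T \<and> u2 \<in> nbrs m t T \<and> f0 (t, T) \<noteq> f0 u1 \<and> f0 (t, T) \<noteq> f0 u2"
      using nb[OF _ t] by blast
  qed
  have nh: "\<And>t. (t, Fh) \<notin> ?S"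
  proof
    fix t assume "(t, Fh) \<in> ?S"
    from step[OF this] show False by (auto simp: nbrs_def f0_def)
  qed
  have ni: "\<And>t. (t, Fi) \<notin> ?S"
  proof
    fix t assume "(t, Fi) \<in> ?S"
    from step[OF this] show False by (auto simp: nbrs_def f0_def)
  qed
  have nx: "\<And>t. (t, Fx) \<notin> ?S"
  proof
    fix t assume "(t, Fx) \<in> ?S"
    from step[OF this] show False by (auto simp: nbrs_def f0_def)
  qed
  have nbb: "\<And>t. (t, Fb) \<notin> ?S"
  proof
    fix t assume "(t, Fb) \<in> ?S"
    from step[OF this] show False using nx by (auto simp: nbrs_def f0_def)
  qed
  have ng: "\<And>t. (t, Fg) \<notin> ?S"
  proof
    fix t assume "(t, Fg) \<in> ?S"
    from step[OF this] show False using nbb by (auto simp: nbrs_def f0_def)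
  qed
  have na: "\<And>t. (t, Fa) \<notin> ?S"
  proof
    fix t assume "(t, Fa) \<in> ?S"
    from step[OF this] show False using nh by (auto simp: nbrs_def f0_def)
  qed
  have nd: "\<And>t. (t, Fd) \<notin> ?S"
  proof
    fix t assume "(t, Fd) \<in> ?S"
    from step[OF this] show False using ni by (auto simp: nbrs_def f0_def)
  qed
  have nc: "\<And>t. (t, Fc) \<notin> ?S"
  proof
    fix t assume "(t, Fc) \<in> ?S"
    from step[OF this] show False using ng by (auto simp: nbrs_def f0_def)
  qed
  have ne': "\<And>t. (t, Fe) \<notin> ?S"
  proof
    fix t assume "(t, Fe) \<in> ?S"
    from step[OF this] show False using na nc nd nx by (auto simp: nbrs_def f0_def)
  qed
  obtain q where q: "q \<in> ?S" using ne by (meson ex_in_conv)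
  obtain t T where qt: "q = (t, T)" by (cases q)
  have "T \<noteq> Fx'" using q qt SV by (auto simp: Gm_V_def)
  then show False using q qt nh ni nx nbb ng na nd nc ne' by (cases T) auto
qed

lemma exists_col: "acyclic_S3S3_colouring (Gm_V m) (Gm_E m) f0"
  unfolding acyclic_S3S3_colouring_def using deg_f0 acyc_f0 by (auto simp: f0_def)


theorem mainTheorem9:
  fixes m :: nat
  assumes "m \<ge> 1"
  shows "(\<exists>c. acyclic_S3S3_colouring (Gm_V m) (Gm_E m) c) \<and>
         (\<forall>c. acyclic_S3S3_colouring (Gm_V m) (Gm_E m) c \<longrightarrow>
            (\<forall>s \<in> {1..m}. \<forall>t \<in> {1..m}. c (w s) = c (w t)) \<and>
            (\<forall>s \<in> {1..m}. saturated3 (Gm_V m) (Gm_E m) c (w s)))"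
proof (intro conjI allI impI)
  show "\<exists>c. acyclic_S3S3_colouring (Gm_V m) (Gm_E m) c" using exists_col by blast
next
  fix c assume A: "acyclic_S3S3_colouring (Gm_V m) (Gm_E m) c"
  show "\<forall>s \<in> {1..m}. \<forall>t \<in> {1..m}. c (w s) = c (w t)"
  proof (intro ballI)
    fix s t assume "s \<in> {1..m}" "t \<in> {1..m}"
    then have "s - 1 < m" "t - 1 < m" by auto
    then have "c (s - 1, Fx) = c (0, Fx)" "c (t - 1, Fx) = c (0, Fx)" using same_col[OF A] by blast+
    then show "c (w s) = c (w t)" unfolding w_def by simp
  qed
  show "\<forall>s \<in> {1..m}. saturated3 (Gm_V m) (Gm_E m) c (w s)"
  proof
    fix s assume "s \<in> {1..m}"
    then have "s - 1 < m" by auto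
    then show "saturated3 (Gm_V m) (Gm_E m) c (w s)"
      using sat[OF A] unfolding w_def saturated3_def by blast
  qed
qed

end
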